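(* Let $a,b>0$, $\alpha\in\mathbb R$, and $\rho_1,\rho_2\ge0$ with $\rho_1>0$ or $\rho_2>0$. Let $X\sim\mathrm{Binom}(m_1,\frac{a\log n}{n})$ and $R\sim\mathrm{Binom}(m_2,\frac{b\log n}{n})$ be independent, where $m_1=\rho_1n+o(n)$ and $m_2=\rho_2n+o(n)$, and let $k$ be an integer with $k=\alpha\log n+o(\log n)$. If $\alpha\le a\rho_1-b\rho_2$ (and, when $\rho_2=0$, $\alpha>0$), then $$\mathbb P\{X-R\le k\}=n^{-g(\rho_1,\rho_2,a,b,\alpha)+o(1)},$$ where, with $\gamma=\sqrt{\alpha^2+4\rho_1\rho_2ab}$, $$g(\rho_1,\rho_2,a,b,\alpha)=\begin{cases}a\rho_1+b\rho_2-\gamma-\frac{\alpha}{2}\log\frac{(\gamma-\alpha)a\rho_1}{(\gamma+\alpha)b\rho_2},&\rho_1,\rho_2>0,\\ \rho_2b+\alpha\log\frac{-e\rho_2b}{\alpha},&\rho_1=0,\rho_2>0,\\ \rho_1a-\alpha\log\frac{e\rho_1a}{\alpha},&\rho_1>0,\rho_2=0.\end{cases}$$ Furthermore, for any nonnegative integers $m_1,m_2$ (not both zero) and integer $k$ with $k\le(m_1a-m_2b)\log n/n$ (and $k>0$ if $m_2=0$), $$\mathbb P\{X-R\le k\}\le n^{-g(m_1/n,\,m_2/n,\,a,\,b,\,k/\log n)}.$$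
   Context: $\mathrm{Binom}(m,p)$ denotes the binomial distribution; logarithms are natural. *)

theory Defs
  imports "HOL-Probability.Probability" "HOL-Library.Landau_Symbols"
begin

definition diff_prob :: "real \<Rightarrow> real \<Rightarrow> nat \<Rightarrow> nat \<Rightarrow> nat \<Rightarrow> int \<Rightarrow> real" where
  "diff_prob a b n m1 m2 k =
     measure_pmf.prob
       (pair_pmf (binomial_pmf m1 (a * ln (real n) / real n)) (binomial_pmf m2 (b * ln (real n) / real n)))
       {(x, r). int x - int r \<le> k}"

definition g_rate :: "real \<Rightarrow> real \<Rightarrow> real \<Rightarrow> real \<Rightarrow> real \<Rightarrow> real" where
  "g_rate \<rho>1 \<rho>2 a b \<alpha> =
     (let \<gamma> = sqrt (\<alpha>\<^sup>2 + 4 * \<rho>1 * \<rho>2 * a * b) in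
      if \<rho>1 > 0 \<and> \<rho>2 > 0 then
        a * \<rho>1 + b * \<rho>2 - \<gamma> - \<alpha> / 2 * ln (((\<gamma> - \<alpha>) * a * \<rho>1) / ((\<gamma> + \<alpha>) * b * \<rho>2))
      else if \<rho>1 = 0 \<and> \<rho>2 > 0 then
        \<rho>2 * b + \<alpha> * ln (- exp 1 * \<rho>2 * b / \<alpha>)
      else
        \<rho>1 * a - \<alpha> * ln (exp 1 * \<rho>1 * a / \<alpha>))"

end

theory Submission
  imports Defs "HOL-Real_Asymp.Real_Asymp"
begin

lemma set_pmf_binomial_sub:
  assumes "0 \<le> p" "p \<le> 1"
  shows "set_pmf (binomial_pmf n p) \<subseteq> {..n}"
  using set_pmf_binomial_eq[OF assms, of n] by auto

lemma binom_mgf: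
  fixes p t :: real
  assumes "0 \<le> p" "p \<le> 1" "t > 0"
  shows "(\<Sum>x\<le>m. pmf (binomial_pmf m p) x * t ^ x) \<le> exp (real m * p * (t - 1))"
proof -
  have "(\<Sum>x\<le>m. pmf (binomial_pmf m p) x * t ^ x) = (\<Sum>x\<le>m. real (m choose x) * (p*t) ^ x * (1 - p) ^ (m - x))"
    using assms by (intro sum.cong) (auto simp: pmf_binomial power_mult_distrib)
  also have "\<dots> = (p * t + (1 - p)) ^ m" by (subst binomial_ring) simp
  also have "\<dots> = (1 + p * (t - 1)) ^ m" by (simp add: algebra_simps)
  also have "\<dots> \<le> exp (p * (t - 1)) ^ m"
  proof (rule power_mono)
    show "1 + p * (t - 1) \<le> exp (p * (t - 1))" by (rule exp_ge_add_one_self)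
    have "p * (t - 1) \<ge> - p" using assms by (simp add: algebra_simps)
    then show "0 \<le> 1 + p * (t - 1)" using assms by linarith
  qed
  also have "\<dots> = exp (real m * p * (t - 1))" by (simp add: exp_of_nat_mult[symmetric] mult.assoc)
  finally show ?thesis .
qed

lemma chernoff:
  fixes p1 p2 \<theta> :: real and k :: int
  assumes p: "0 \<le> p1" "p1 \<le> 1" "0 \<le> p2" "p2 \<le> 1" and th: "\<theta> \<ge> 0"
  shows "measure_pmf.prob (pair_pmf (binomial_pmf m1 p1) (binomial_pmf m2 p2)) {(x, r). int x - int r \<le> k}
     \<le> exp (\<theta> * k + real m1 * p1 * (exp (-\<theta>) - 1) + real m2 * p2 * (exp \<theta> - 1))"
proof -
  define M where "M = pair_pmf (binomial_pmf m1 p1) (binomial_pmf m2 p2)"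
  define A where "A = {(x::nat, r::nat). int x - int r \<le> k}"
  define S where "S = {..m1} \<times> {..m2}"
  have sub: "set_pmf M \<subseteq> S" unfolding M_def S_def
    using set_pmf_binomial_sub[OF p(1,2), of m1] set_pmf_binomial_sub[OF p(3,4), of m2] by auto
  have fin: "finite S" unfolding S_def by simp
  define w where "w = (\<lambda>(x::nat, r::nat). exp (\<theta> * (real_of_int k - real x + real r)))"
  have "measure_pmf.prob M A = measure_pmf.prob M (A \<inter> set_pmf M)" by (simp add: measure_Int_set_pmf)
  also have "\<dots> \<le> measure_pmf.prob M (A \<inter> S)"
    using sub by (intro measure_pmf.finite_measure_mono) auto
  also have "\<dots> = sum (pmf M) (A \<inter> S)" using fin by (intro measure_measure_pmf_finite) auto
  also have "\<dots> \<le> sum (\<lambda>z. pmf M z * w z) (A \<inter> S)"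
  proof (rule sum_mono)
    fix z assume "z \<in> A \<inter> S"
    then obtain x r where z: "z = (x, r)" "int x - int r \<le> k" unfolding A_def by auto
    have "1 \<le> w z" unfolding z w_def using z(2) th by (auto intro!: mult_nonneg_nonneg)
    then show "pmf M z \<le> pmf M z * w z" by (simp add: mult_le_cancel_left1)
  qed
  also have "\<dots> \<le> sum (\<lambda>z. pmf M z * w z) S"
    using fin by (intro sum_mono2) (auto simp: w_def)
  also have "\<dots> = (\<Sum>x\<le>m1. \<Sum>r\<le>m2. pmf M (x, r) * w (x, r))"
    unfolding S_def by (simp add: sum.cartesian_product)
  also have "\<dots> = (\<Sum>x\<le>m1. \<Sum>r\<le>m2. exp (\<theta> * k) * ((pmf (binomial_pmf m1 p1) x * exp (-\<theta>) ^ x) * (pmf (binomial_pmf m2 p2) r * exp \<theta> ^ r)))"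
  proof (intro sum.cong refl)
    fix x r
    have "w (x, r) = exp (\<theta> * k) * exp (real x * (-\<theta>)) * exp (real r * \<theta>)"
      unfolding w_def by (simp add: exp_add[symmetric] algebra_simps)
    moreover have "exp (real x * (-\<theta>)) = exp (-\<theta>) ^ x" "exp (real r * \<theta>) = exp \<theta> ^ r"
      by (simp_all only: exp_of_nat_mult)
    ultimately show "pmf M (x, r) * w (x, r) = exp (\<theta> * k) * ((pmf (binomial_pmf m1 p1) x * exp (-\<theta>) ^ x) * (pmf (binomial_pmf m2 p2) r * exp \<theta> ^ r))"
      by (simp only: M_def pmf_pair mult_ac)
  qed
  also have "\<dots> = exp (\<theta> * k) * ((\<Sum>x\<le>m1. pmf (binomial_pmf m1 p1) x * exp (-\<theta>) ^ x) * (\<Sum>r\<le>m2. pmf (binomial_pmf m2 p2) r * exp \<theta> ^ r))"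
    by (subst sum_product) (simp add: sum_distrib_left)
  also have "\<dots> = exp (\<theta> * k) * (\<Sum>x\<le>m1. pmf (binomial_pmf m1 p1) x * exp (-\<theta>) ^ x) * (\<Sum>r\<le>m2. pmf (binomial_pmf m2 p2) r * exp \<theta> ^ r)"
    by (simp only: mult.assoc)
  also have "\<dots> \<le> exp (\<theta> * k) * exp (real m1 * p1 * (exp (-\<theta>) - 1)) * exp (real m2 * p2 * (exp \<theta> - 1))"
    by (intro mult_mono binom_mgf p) (auto intro: sum_nonneg)
  also have "\<dots> = exp (\<theta> * k + real m1 * p1 * (exp (-\<theta>) - 1) + real m2 * p2 * (exp \<theta> - 1))"
    by (simp add: exp_add)
  finally show ?thesis unfolding M_def A_def .
qed

definition theta_opt :: "real \<Rightarrow> real \<Rightarrow> real \<Rightarrow> real \<Rightarrow> real \<Rightarrow> real" where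
  "theta_opt a b \<rho>1 \<rho>2 \<alpha> =
     (if \<rho>1 > 0 \<and> \<rho>2 > 0 then ln ((sqrt (\<alpha>\<^sup>2 + 4 * \<rho>1 * \<rho>2 * a * b) - \<alpha>) / (2 * \<rho>2 * b))
      else if \<rho>1 = 0 \<and> \<rho>2 > 0 then ln (- \<alpha> / (\<rho>2 * b)) else ln (\<rho>1 * a / \<alpha>))"

lemma key:
  fixes a b \<rho>1 \<rho>2 \<alpha> :: real
  assumes ab: "a > 0" "b > 0" and r: "\<rho>1 \<ge> 0" "\<rho>2 \<ge> 0" "\<rho>1 > 0 \<or> \<rho>2 > 0"
    and al: "\<alpha> \<le> a * \<rho>1 - b * \<rho>2" "\<rho>2 = 0 \<longrightarrow> \<alpha> > 0"
  shows "theta_opt a b \<rho>1 \<rho>2 \<alpha> \<ge> 0"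
    "theta_opt a b \<rho>1 \<rho>2 \<alpha> * \<alpha> + \<rho>1 * a * (exp (- theta_opt a b \<rho>1 \<rho>2 \<alpha>) - 1)
       + \<rho>2 * b * (exp (theta_opt a b \<rho>1 \<rho>2 \<alpha>) - 1) = - g_rate \<rho>1 \<rho>2 a b \<alpha>"
proof -
  define \<theta> where "\<theta> = theta_opt a b \<rho>1 \<rho>2 \<alpha>"
  have "\<theta> \<ge> 0 \<and> \<theta> * \<alpha> + \<rho>1 * a * (exp (- \<theta>) - 1) + \<rho>2 * b * (exp \<theta> - 1) = - g_rate \<rho>1 \<rho>2 a b \<alpha>"
  proof (cases "\<rho>1 > 0 \<and> \<rho>2 > 0")
    case True
    define \<gamma> where "\<gamma> = sqrt (\<alpha>\<^sup>2 + 4 * \<rho>1 * \<rho>2 * a * b)"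
    have pos: "4 * \<rho>1 * \<rho>2 * a * b > 0" using True ab by simp
    have "0 \<le> \<alpha>\<^sup>2" by simp
    hence nn: "0 \<le> \<alpha>\<^sup>2 + 4 * \<rho>1 * \<rho>2 * a * b" using pos by linarith
    have g2: "\<gamma>\<^sup>2 = \<alpha>\<^sup>2 + 4 * \<rho>1 * \<rho>2 * a * b" unfolding \<gamma>_def
      using nn by (rule real_sqrt_pow2)
    have gpos: "\<gamma> \<ge> 0" unfolding \<gamma>_def using nn by simp
    have "\<bar>\<alpha>\<bar> < \<gamma>"
    proof -
      have "\<bar>\<alpha>\<bar>\<^sup>2 < \<gamma>\<^sup>2" using g2 pos by simp
      then show ?thesis using gpos by (rule power2_less_imp_less)
    qed
    hence gm: "\<gamma> - \<alpha> > 0" and gp: "\<gamma> + \<alpha> > 0" by auto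
    define y where "y = (\<gamma> - \<alpha>) / (2 * \<rho>2 * b)"
    have ypos: "y > 0" unfolding y_def using gm True ab by simp
    have th: "\<theta> = ln y" unfolding \<theta>_def theta_opt_def y_def \<gamma>_def using True by simp
    have "y \<ge> 1"
    proof (cases "\<alpha> + 2 * \<rho>2 * b \<le> 0")
      case True then show ?thesis unfolding y_def using gpos \<open>\<rho>1 > 0 \<and> \<rho>2 > 0\<close> ab
        by (simp add: field_simps)
    next
      case False
      have "(\<alpha> + 2 * \<rho>2 * b)\<^sup>2 = \<alpha>\<^sup>2 + 4 * \<rho>2 * b * (\<alpha> + \<rho>2 * b)" by (simp add: power2_eq_square algebra_simps)
      also have "\<dots> \<le> \<alpha>\<^sup>2 + 4 * \<rho>2 * b * (\<rho>1 * a)"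
      proof -
        have "\<alpha> + \<rho>2 * b \<le> \<rho>1 * a" using al(1) by (simp add: algebra_simps)
        moreover have "0 \<le> 4 * \<rho>2 * b" using True ab by simp
        ultimately have "4 * \<rho>2 * b * (\<alpha> + \<rho>2 * b) \<le> 4 * \<rho>2 * b * (\<rho>1 * a)" by (rule mult_left_mono)
        then show ?thesis by linarith
      qed
      also have "\<dots> = \<gamma>\<^sup>2" using g2 by (simp add: algebra_simps)
      finally have "\<alpha> + 2 * \<rho>2 * b \<le> \<gamma>" using gpos
        by (rule power2_le_imp_le)
      then show ?thesis unfolding y_def using \<open>\<rho>1 > 0 \<and> \<rho>2 > 0\<close> ab by (simp add: le_divide_eq_1_pos)
    qed
    hence "\<theta> \<ge> 0" using th by simp
    have ey: "exp \<theta> = y" "exp (- \<theta>) = 1 / y" using th ypos by (simp_all add: exp_minus inverse_eq_divide)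
    have prod: "(\<gamma> - \<alpha>) * (\<gamma> + \<alpha>) = 4 * \<rho>1 * \<rho>2 * a * b" using g2 by (simp add: power2_eq_square algebra_simps)
    have e1: "\<rho>1 * a * (1 / y) = (\<gamma> + \<alpha>) / 2"
    proof -
      have "\<rho>1 * a * (1 / y) = (4 * \<rho>1 * \<rho>2 * a * b) / (2 * (\<gamma> - \<alpha>))"
        unfolding y_def using gm by (simp add: field_simps)
      also have "\<dots> = ((\<gamma> - \<alpha>) * (\<gamma> + \<alpha>)) / (2 * (\<gamma> - \<alpha>))" by (simp only: prod)
      also have "\<dots> = (\<gamma> + \<alpha>) / 2" using gm by (simp add: divide_simps)
      finally show ?thesis .
    qed
    have e2: "\<rho>2 * b * y = (\<gamma> - \<alpha>) / 2" unfolding y_def using True ab by (simp add: field_simps)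
    have sq: "((\<gamma> - \<alpha>) * a * \<rho>1) / ((\<gamma> + \<alpha>) * b * \<rho>2) = y ^ 2"
    proof -
      have "y ^ 2 = (\<gamma> - \<alpha>) ^ 2 / (2 * \<rho>2 * b) ^ 2" by (simp add: y_def power_divide)
      moreover have "(\<gamma> - \<alpha>) ^ 2 * ((\<gamma> + \<alpha>) * b * \<rho>2) = (\<gamma> - \<alpha>) * ((\<gamma> - \<alpha>) * (\<gamma> + \<alpha>)) * b * \<rho>2"
        by (simp add: power2_eq_square algebra_simps)
      moreover have "(\<gamma> - \<alpha>) * (4 * \<rho>1 * \<rho>2 * a * b) * b * \<rho>2 = (\<gamma> - \<alpha>) * a * \<rho>1 * (2 * \<rho>2 * b) ^ 2"
        by (simp add: power2_eq_square algebra_simps)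
      ultimately show ?thesis using gm gp True ab prod by (simp add: frac_eq_eq)
    qed
    have lnsq: "ln (y ^ 2) = 2 * ln y" using ypos by (simp add: ln_realpow)
    have "g_rate \<rho>1 \<rho>2 a b \<alpha> = a * \<rho>1 + b * \<rho>2 - \<gamma> - \<alpha> / 2 * ln (y ^ 2)"
      unfolding g_rate_def Let_def \<gamma>_def[symmetric] sq using True by simp
    moreover have "\<theta> * \<alpha> + \<rho>1 * a * (exp (- \<theta>) - 1) + \<rho>2 * b * (exp \<theta> - 1)
       = \<alpha> * ln y + \<rho>1 * a * (1 / y) + \<rho>2 * b * y - \<rho>1 * a - \<rho>2 * b"
      unfolding ey by (simp add: th algebra_simps)
    ultimately show ?thesis using \<open>\<theta> \<ge> 0\<close> unfolding e1 e2 lnsq by (simp add: algebra_simps add_divide_distrib[symmetric])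
  next
    case False
    show ?thesis
    proof (cases "\<rho>1 = 0")
      case True
      with r have r2: "\<rho>2 > 0" by auto
      have an: "\<alpha> < 0" "- \<alpha> \<ge> \<rho>2 * b" using al True ab r2 by (auto simp: mult_pos_pos algebra_simps) (smt (verit) mult_pos_pos)
      define y where "y = - \<alpha> / (\<rho>2 * b)"
      have ypos: "y \<ge> 1" unfolding y_def using an r2 ab by (simp add: field_simps)
      have th: "\<theta> = ln y" unfolding \<theta>_def theta_opt_def y_def using True r2 by simp
      have ey: "exp \<theta> = y" using th ypos by simp
      have "ln (- exp 1 * \<rho>2 * b / \<alpha>) = 1 - ln y"
      proof -
        have "- exp 1 * \<rho>2 * b / \<alpha> = exp 1 / y" unfolding y_def using an r2 ab by (simp add: field_simps)
        then show ?thesis using ypos by (simp add: ln_div)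
      qed
      then have "g_rate \<rho>1 \<rho>2 a b \<alpha> = \<rho>2 * b + \<alpha> * (1 - ln y)"
        unfolding g_rate_def Let_def using True r2 by simp
      moreover have "\<rho>2 * b * y = - \<alpha>" unfolding y_def using r2 ab by simp
      ultimately show ?thesis using th ey ypos True by (simp add: algebra_simps)
    next
      case False
      with r \<open>\<not> (\<rho>1 > 0 \<and> \<rho>2 > 0)\<close> have r1: "\<rho>1 > 0" "\<rho>2 = 0" by auto
      have an: "\<alpha> > 0" "\<alpha> \<le> \<rho>1 * a" using al r1 by (auto simp: algebra_simps)
      define y where "y = \<rho>1 * a / \<alpha>"
      have ypos: "y \<ge> 1" unfolding y_def using an by (simp add: field_simps)
      have th: "\<theta> = ln y" unfolding \<theta>_def theta_opt_def y_def using r1 by simp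
      have ey: "exp (- \<theta>) = 1 / y" using th ypos by (simp add: exp_minus inverse_eq_divide)
      have "ln (exp 1 * \<rho>1 * a / \<alpha>) = 1 + ln y"
      proof -
        have "exp 1 * \<rho>1 * a / \<alpha> = exp 1 * y" unfolding y_def by simp
        then show ?thesis using ypos by (simp add: ln_mult)
      qed
      then have "g_rate \<rho>1 \<rho>2 a b \<alpha> = \<rho>1 * a - \<alpha> * (1 + ln y)"
        unfolding g_rate_def Let_def using r1 by simp
      moreover have "\<rho>1 * a * (1 / y) = \<alpha>" unfolding y_def using r1 an ab by simp
      ultimately show ?thesis using th ey ypos r1 by (simp add: algebra_simps)
    qed
  qed
  then show "theta_opt a b \<rho>1 \<rho>2 \<alpha> \<ge> 0"
    "theta_opt a b \<rho>1 \<rho>2 \<alpha> * \<alpha> + \<rho>1 * a * (exp (- theta_opt a b \<rho>1 \<rho>2 \<alpha>) - 1)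
       + \<rho>2 * b * (exp (theta_opt a b \<rho>1 \<rho>2 \<alpha>) - 1) = - g_rate \<rho>1 \<rho>2 a b \<alpha>"
    unfolding \<theta>_def by auto
qed

lemma lim_ln_over: "(\<lambda>n::nat. ln (real n) / real n) \<longlonglongrightarrow> 0"
proof -
  have l1: "((\<lambda>x::real. ln x / x) \<longlongrightarrow> 0) at_top" by real_asymp
  show ?thesis using filterlim_compose[OF l1 filterlim_real_sequentially] by simp
qed

lemma lim_lnln: "(\<lambda>n::nat. ln (ln (real n)) / ln (real n)) \<longlonglongrightarrow> 0"
proof -
  have l1: "((\<lambda>x::real. ln (ln x) / ln x) \<longlongrightarrow> 0) at_top" by real_asymp
  show ?thesis using filterlim_compose[OF l1 filterlim_real_sequentially] by simp
qed

lemma lim_inv_ln: "(\<lambda>n::nat. 1 / ln (real n)) \<longlonglongrightarrow> 0"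
proof -
  have l1: "((\<lambda>x::real. 1 / ln x) \<longlongrightarrow> 0) at_top" by real_asymp
  show ?thesis using filterlim_compose[OF l1 filterlim_real_sequentially] by simp
qed

lemma ev_ln_pos: "\<forall>\<^sub>F n in sequentially. ln (real n) > 0"
  using eventually_ge_at_top[of "2::nat"] by eventually_elim simp

lemma ln_fact_le: "ln (fact x :: real) \<le> (real x + 1) * ln (real x + 1) - real x"
proof (induction x)
  case 0 then show ?case by simp
next
  case (Suc x)
  have "ln (fact (Suc x) :: real) = ln (real x + 1) + ln (fact x)"
    by (simp add: ln_mult add.commute)
  also have "\<dots> \<le> ln (real x + 1) + ((real x + 1) * ln (real x + 1) - real x)" using Suc by simp
  also have "\<dots> \<le> (real x + 2) * ln (real x + 2) - (real x + 1)"
  proof -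
    have "ln ((real x + 1) / (real x + 2)) \<le> (real x + 1) / (real x + 2) - 1"
      by (rule ln_le_minus_one) simp
    then have "ln (real x + 1) - ln (real x + 2) \<le> - 1 / (real x + 2)"
      by (simp add: ln_div field_simps)
    then have "(real x + 2) * (ln (real x + 1) - ln (real x + 2)) \<le> - 1"
      by (simp add: field_simps)
    then show ?thesis by (simp add: algebra_simps)
  qed
  finally show ?case by (simp add: add.commute)
qed

lemma fact_add_ge: "real a ^ x * fact a \<le> (fact (a + x) :: real)"
proof (induction x)
  case 0 then show ?case by simp
next
  case (Suc x)
  have "real a ^ Suc x * fact a = real a * (real a ^ x * fact a)" by simp
  also have "\<dots> \<le> real (Suc (a + x)) * fact (a + x)"
    using Suc by (intro mult_mono) auto
  also have "\<dots> = fact (a + Suc x)" by simp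
  finally show ?case .
qed

lemma binom_lower:
  assumes "x \<le> m"
  shows "real (m - x) ^ x / fact x \<le> real (m choose x)"
proof -
  have "real (m choose x) = fact m / (fact x * fact (m - x))" using binomial_fact[OF assms] by simp
  moreover have "real (m - x) ^ x * fact (m - x) \<le> fact m"
    using fact_add_ge[of "m - x" x] assms by simp
  ultimately have "fact (m - x) * real (m - x) ^ x \<le> fact (m - x) * (fact x * real (m choose x))"
    by (simp add: field_simps)
  then have "real (m - x) ^ x \<le> fact x * real (m choose x)"
    by (subst (asm) mult_le_cancel_left_pos) auto
  then show ?thesis by (simp add: field_simps)
qed

lemma ln_one_minus_ge: "(0::real) \<le> p \<Longrightarrow> p < 1 \<Longrightarrow> ln (1 - p) \<ge> - p / (1 - p)"
proof -
  assume p: "0 \<le> p" "p < 1"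
  have "ln (1 / (1 - p)) \<le> 1 / (1 - p) - 1" by (rule ln_le_minus_one) (use p in simp)
  also have "1 / (1 - p) - 1 = p / (1 - p)" using p by (simp add: field_simps)
  finally show ?thesis using p by (simp add: ln_div)
qed

lemma pmf_lower_fin:
  fixes n m x :: nat and a :: real
  defines "L \<equiv> ln (real n)"
  defines "p \<equiv> a * L / real n"
  assumes L: "L > 0" and p: "0 < p" "p < 1" and xm: "x < m"
  shows "pmf (binomial_pmf m p) x > 0"
    "(real x / L) * ln ((real m - real x) / real n * a * (L / (real x + 1))) - ln (real x + 1) / L + real x / L
       - real m / real n * a / (1 - p) \<le> ln (pmf (binomial_pmf m p) x) / L"
proof -
  have n: "real n > 0" using L unfolding L_def by (cases "n = 0") auto
  have a: "a > 0" using p(1) n L unfolding p_def by (simp add: zero_less_mult_iff zero_less_divide_iff)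
  have C: "real (m choose x) > 0" using xm by simp
  have pmf_eq: "pmf (binomial_pmf m p) x = real (m choose x) * p ^ x * (1 - p) ^ (m - x)"
    using p by (intro pmf_binomial) auto
  show pos: "pmf (binomial_pmf m p) x > 0" unfolding pmf_eq using C p by simp
  have mx: "real (m - x) = real m - real x" using xm by simp
  have mxpos: "real m - real x > 0" using xm by simp
  have "ln (pmf (binomial_pmf m p) x) = ln (real (m choose x)) + real x * ln p + real (m - x) * ln (1 - p)"
    unfolding pmf_eq using C p by (simp add: ln_mult ln_realpow)
  moreover have "ln (real (m choose x)) \<ge> real x * ln (real m - real x) - ln (fact x)"
  proof -
    have "ln (real (m - x) ^ x / fact x) \<le> ln (real (m choose x))"
      using binom_lower[of x m] xm mxpos mx by (subst ln_le_cancel_iff) auto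
    then show ?thesis using mxpos mx by (simp add: ln_div ln_realpow)
  qed
  moreover have "real (m - x) * ln (1 - p) \<ge> real m * ln (1 - p)"
  proof -
    have "ln (1 - p) \<le> 0" using p by simp
    then show ?thesis using xm by (intro mult_right_mono_neg) auto
  qed
  moreover have "real m * ln (1 - p) \<ge> real m * (- p / (1 - p))"
    using ln_one_minus_ge[of p] p by (intro mult_left_mono) auto
  moreover have "ln (fact x :: real) \<le> (real x + 1) * ln (real x + 1) - real x" by (rule ln_fact_le)
  moreover have "real x * ln ((real m - real x) / real n * a * (L / (real x + 1)))
     = real x * ln (real m - real x) + real x * ln p - real x * ln (real x + 1)"
  proof -
    have "(real m - real x) / real n * a * (L / (real x + 1)) = (real m - real x) * p / (real x + 1)"
      unfolding p_def by (simp add: field_simps)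
    then have "ln ((real m - real x) / real n * a * (L / (real x + 1))) = ln (real m - real x) + ln p - ln (real x + 1)"
      using mxpos p by (simp add: ln_mult ln_div)
    then show ?thesis by (simp only: right_diff_distrib distrib_left)
  qed
  moreover have "real m * (- p / (1 - p)) = - (real m * p / (1 - p))" by simp
  moreover have "(real x + 1) * ln (real x + 1) = real x * ln (real x + 1) + ln (real x + 1)" by (simp add: algebra_simps)
  ultimately have H: "real x * ln ((real m - real x) / real n * a * (L / (real x + 1)))
      - ln (real x + 1) + real x - real m * p / (1 - p) \<le> ln (pmf (binomial_pmf m p) x)"
    by (smt (verit))
  have mp: "real m * p / (1 - p) / L = real m / real n * a / (1 - p)"
  proof -
    have pL: "p / L = a / real n" unfolding p_def using L by simp
    have "real m * p / (1 - p) / L = real m * (p / L) / (1 - p)" using L p by (simp add: field_simps)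
    then show ?thesis unfolding pL by simp
  qed
  have "(real x * ln ((real m - real x) / real n * a * (L / (real x + 1)))
      - ln (real x + 1) + real x - real m * p / (1 - p)) / L \<le> ln (pmf (binomial_pmf m p) x) / L"
    using H L by (intro divide_right_mono) auto
  moreover have "(real x * ln ((real m - real x) / real n * a * (L / (real x + 1)))
      - ln (real x + 1) + real x - real m * p / (1 - p)) / L =
      (real x / L) * ln ((real m - real x) / real n * a * (L / (real x + 1))) - ln (real x + 1) / L + real x / L
       - real m * p / (1 - p) / L"
    by (simp add: diff_divide_distrib add_divide_distrib)
  ultimately show "(real x / L) * ln ((real m - real x) / real n * a * (L / (real x + 1))) - ln (real x + 1) / L + real x / L
       - real m / real n * a / (1 - p) \<le> ln (pmf (binomial_pmf m p) x) / L"
    unfolding mp by simp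
qed

lemma pmf_lower0_fin:
  fixes n m :: nat and a :: real
  defines "L \<equiv> ln (real n)"
  defines "p \<equiv> a * L / real n"
  assumes L: "L > 0" and p: "0 \<le> p" "p < 1"
  shows "pmf (binomial_pmf m p) 0 > 0"
    "- real m / real n * a / (1 - p) \<le> ln (pmf (binomial_pmf m p) 0) / L"
proof -
  have n: "real n > 0" using L unfolding L_def by (cases "n = 0") auto
  have pmf_eq: "pmf (binomial_pmf m p) 0 = (1 - p) ^ m"
    using p by (subst pmf_binomial) auto
  show "pmf (binomial_pmf m p) 0 > 0" unfolding pmf_eq using p by simp
  have "ln (pmf (binomial_pmf m p) 0) = real m * ln (1 - p)" unfolding pmf_eq using p by (simp add: ln_realpow)
  also have "\<dots> \<ge> real m * (- p / (1 - p))"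
    using ln_one_minus_ge[of p] p by (intro mult_left_mono) auto
  finally have H: "- (real m * p / (1 - p)) \<le> ln (pmf (binomial_pmf m p) 0)" by simp
  have mp: "real m * p / (1 - p) / L = real m / real n * a / (1 - p)"
  proof -
    have pL: "p / L = a / real n" unfolding p_def using L by simp
    have "real m * p / (1 - p) / L = real m * (p / L) / (1 - p)" using L p by (simp add: field_simps)
    then show ?thesis unfolding pL by simp
  qed
  have "- (real m * p / (1 - p)) / L \<le> ln (pmf (binomial_pmf m p) 0) / L"
    using H L by (intro divide_right_mono) auto
  then show "- real m / real n * a / (1 - p) \<le> ln (pmf (binomial_pmf m p) 0) / L"
    using mp by simp
qed

lemma lim_p: "(\<lambda>n::nat. a * ln (real n) / real n) \<longlonglongrightarrow> 0"
proof -
  have "(\<lambda>n::nat. a * (ln (real n) / real n)) \<longlonglongrightarrow> a * 0" by (intro tendsto_intros lim_ln_over)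
  then show ?thesis by simp
qed

lemma point_lower:
  fixes m x :: "nat \<Rightarrow> nat" and a \<rho> c :: real
  assumes a: "a > 0" and \<rho>: "\<rho> > 0" and c: "c > 0"
    and hm: "(\<lambda>n. real (m n) / real n) \<longlonglongrightarrow> \<rho>"
    and hx: "(\<lambda>n. real (x n) / ln (real n)) \<longlonglongrightarrow> c"
  shows "\<exists>V. V \<longlonglongrightarrow> c * ln (\<rho> * a / c) + c - \<rho> * a \<and>
     (\<forall>\<^sub>F n in sequentially. pmf (binomial_pmf (m n) (a * ln (real n) / real n)) (x n) > 0 \<and>
        V n \<le> ln (pmf (binomial_pmf (m n) (a * ln (real n) / real n)) (x n)) / ln (real n))"
proof -
  define L where "L = (\<lambda>n::nat. ln (real n))"
  define p where "p = (\<lambda>n::nat. a * L n / real n)"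
  define V where "V = (\<lambda>n. (real (x n) / L n) * ln ((real (m n) - real (x n)) / real n * a * (L n / (real (x n) + 1)))
      - ln (real (x n) + 1) / L n + real (x n) / L n - real (m n) / real n * a / (1 - p n))"
  have Lpos: "\<forall>\<^sub>F n in sequentially. L n > 0" unfolding L_def by (rule ev_ln_pos)
  have hp: "p \<longlonglongrightarrow> 0" unfolding p_def L_def by (rule lim_p)
  have hLn: "(\<lambda>n. L n / real n) \<longlonglongrightarrow> 0" unfolding L_def by (rule lim_ln_over)
  have hiL: "(\<lambda>n. 1 / L n) \<longlonglongrightarrow> 0" unfolding L_def by (rule lim_inv_ln)
  have hlnL: "(\<lambda>n. ln (L n) / L n) \<longlonglongrightarrow> 0" unfolding L_def by (rule lim_lnln)
  have hx': "(\<lambda>n. real (x n) / L n) \<longlonglongrightarrow> c" using hx unfolding L_def .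
  have hxn: "(\<lambda>n. real (x n) / real n) \<longlonglongrightarrow> 0"
  proof -
    have "(\<lambda>n. (real (x n) / L n) * (L n / real n)) \<longlonglongrightarrow> c * 0" by (intro tendsto_intros hx' hLn)
    moreover have "\<forall>\<^sub>F n in sequentially. (real (x n) / L n) * (L n / real n) = real (x n) / real n"
      using Lpos by eventually_elim simp
    ultimately show ?thesis by (simp add: Lim_transform_eventually)
  qed
  have hmx: "(\<lambda>n. (real (m n) - real (x n)) / real n) \<longlonglongrightarrow> \<rho>"
  proof -
    have "(\<lambda>n. real (m n) / real n - real (x n) / real n) \<longlonglongrightarrow> \<rho> - 0" by (intro tendsto_intros hm hxn)
    then show ?thesis by (simp add: diff_divide_distrib)
  qed
  have hx1: "(\<lambda>n. (real (x n) + 1) / L n) \<longlonglongrightarrow> c"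
  proof -
    have "(\<lambda>n. real (x n) / L n + 1 / L n) \<longlonglongrightarrow> c + 0" by (intro tendsto_intros hx' hiL)
    then show ?thesis by (simp add: add_divide_distrib)
  qed
  have hLx: "(\<lambda>n. L n / (real (x n) + 1)) \<longlonglongrightarrow> 1 / c"
  proof -
    have "(\<lambda>n. 1 / ((real (x n) + 1) / L n)) \<longlonglongrightarrow> 1 / c" using c by (intro tendsto_intros hx1) auto
    then show ?thesis by simp
  qed
  have harg: "(\<lambda>n. (real (m n) - real (x n)) / real n * a * (L n / (real (x n) + 1))) \<longlonglongrightarrow> \<rho> * a * (1 / c)"
    by (intro tendsto_intros hmx hLx)
  have hln: "(\<lambda>n. ln ((real (m n) - real (x n)) / real n * a * (L n / (real (x n) + 1)))) \<longlonglongrightarrow> ln (\<rho> * a * (1 / c))"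
    using \<rho> a c by (intro tendsto_ln harg) auto
  have hlx: "(\<lambda>n. ln (real (x n) + 1) / L n) \<longlonglongrightarrow> 0"
  proof -
    have "(\<lambda>n. ln ((real (x n) + 1) / L n) * (1 / L n) + ln (L n) / L n) \<longlonglongrightarrow> ln c * 0 + 0"
      using c by (intro tendsto_intros hx1 hiL hlnL) auto
    moreover have "\<forall>\<^sub>F n in sequentially. ln ((real (x n) + 1) / L n) * (1 / L n) + ln (L n) / L n = ln (real (x n) + 1) / L n"
      using Lpos
    proof eventually_elim
      case (elim n)
      have "ln ((real (x n) + 1) / L n) = ln (real (x n) + 1) - ln (L n)" using elim by (simp add: ln_div)
      then show ?case using elim by (simp add: field_simps)
    qed
    ultimately show ?thesis by (simp add: Lim_transform_eventually)
  qed
  have hmp: "(\<lambda>n. real (m n) / real n * a / (1 - p n)) \<longlonglongrightarrow> \<rho> * a / (1 - 0)"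
    by (intro tendsto_intros hm hp) auto
  have "V \<longlonglongrightarrow> c * ln (\<rho> * a * (1 / c)) - 0 + c - \<rho> * a / (1 - 0)"
    unfolding V_def by (intro tendsto_intros hx' hln hlx hmp)
  then have limV: "V \<longlonglongrightarrow> c * ln (\<rho> * a / c) + c - \<rho> * a" by simp
  have ev_p: "\<forall>\<^sub>F n in sequentially. p n < 1" using order_tendstoD(2)[OF hp, of 1] by simp
  have ev_mx: "\<forall>\<^sub>F n in sequentially. (real (m n) - real (x n)) / real n > 0" using order_tendstoD(1)[OF hmx \<rho>] .
  have "\<forall>\<^sub>F n in sequentially. pmf (binomial_pmf (m n) (a * ln (real n) / real n)) (x n) > 0 \<and>
        V n \<le> ln (pmf (binomial_pmf (m n) (a * ln (real n) / real n)) (x n)) / ln (real n)"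
    using Lpos ev_p ev_mx
  proof eventually_elim
    case (elim n)
    have n: "real n > 0" using elim(3) by (cases "n = 0") auto
    have xm: "x n < m n" using elim(3) n by (simp add: zero_less_divide_iff)
    have p0: "0 < a * ln (real n) / real n" using elim(1) a n unfolding L_def by simp
    have p1: "a * ln (real n) / real n < 1" using elim(2) unfolding p_def L_def .
    note P = pmf_lower_fin[where n=n and a=a and m="m n" and x="x n", OF elim(1)[unfolded L_def] p0 p1 xm]
    show ?case using P unfolding V_def p_def L_def by simp
  qed
  with limV show ?thesis by blast
qed

lemma point_lower0:
  fixes m :: "nat \<Rightarrow> nat" and a \<rho> :: real
  assumes a: "a > 0" and hm: "(\<lambda>n. real (m n) / real n) \<longlonglongrightarrow> \<rho>"
  shows "\<exists>V. V \<longlonglongrightarrow> - \<rho> * a \<and>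
     (\<forall>\<^sub>F n in sequentially. pmf (binomial_pmf (m n) (a * ln (real n) / real n)) 0 > 0 \<and>
        V n \<le> ln (pmf (binomial_pmf (m n) (a * ln (real n) / real n)) 0) / ln (real n))"
proof -
  define V where "V = (\<lambda>n. - (real (m n) / real n * a / (1 - a * ln (real n) / real n)))"
  have hp: "(\<lambda>n::nat. a * ln (real n) / real n) \<longlonglongrightarrow> 0" by (rule lim_p)
  have "V \<longlonglongrightarrow> - (\<rho> * a / (1 - 0))" unfolding V_def by (intro tendsto_intros hm hp) auto
  then have limV: "V \<longlonglongrightarrow> - \<rho> * a" by simp
  have ev_p: "\<forall>\<^sub>F n in sequentially. a * ln (real n) / real n < 1" using order_tendstoD(2)[OF hp, of 1] by simp
  have "\<forall>\<^sub>F n in sequentially. pmf (binomial_pmf (m n) (a * ln (real n) / real n)) 0 > 0 \<and>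
        V n \<le> ln (pmf (binomial_pmf (m n) (a * ln (real n) / real n)) 0) / ln (real n)"
    using ev_ln_pos ev_p
  proof eventually_elim
    case (elim n)
    have n: "real n > 0" using elim(1) by (cases "n = 0") auto
    have p0: "0 \<le> a * ln (real n) / real n" using elim(1) a n by simp
    note P = pmf_lower0_fin[of n a, OF elim(1) p0 elim(2)]
    show ?case using P unfolding V_def by simp
  qed
  with limV show ?thesis by blast
qed

lemma prob_ge_point:
  assumes "int x - int r \<le> k"
  shows "pmf A x * pmf B r \<le> measure_pmf.prob (pair_pmf A B) {(x, r). int x - int r \<le> k}"
proof -
  have "pmf A x * pmf B r = measure_pmf.prob (pair_pmf A B) {(x, r)}"
    by (simp add: pmf_pair measure_pmf_single)
  also have "\<dots> \<le> measure_pmf.prob (pair_pmf A B) {(x, r). int x - int r \<le> k}"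
    using assms by (intro measure_pmf.finite_measure_mono) auto
  finally show ?thesis .
qed

lemma combine_lower:
  fixes x r :: "nat \<Rightarrow> nat" and m1 m2 :: "nat \<Rightarrow> nat" and k :: "nat \<Rightarrow> int"
  assumes h1: "V1 \<longlonglongrightarrow> l1" "\<forall>\<^sub>F n in sequentially. pmf (binomial_pmf (m1 n) (a * ln (real n) / real n)) (x n) > 0 \<and>
        V1 n \<le> ln (pmf (binomial_pmf (m1 n) (a * ln (real n) / real n)) (x n)) / ln (real n)"
  assumes h2: "V2 \<longlonglongrightarrow> l2" "\<forall>\<^sub>F n in sequentially. pmf (binomial_pmf (m2 n) (b * ln (real n) / real n)) (r n) > 0 \<and>
        V2 n \<le> ln (pmf (binomial_pmf (m2 n) (b * ln (real n) / real n)) (r n)) / ln (real n)"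
  assumes hk: "\<forall>\<^sub>F n in sequentially. int (x n) - int (r n) \<le> k n"
  shows "\<exists>V. V \<longlonglongrightarrow> l1 + l2 \<and> (\<forall>\<^sub>F n in sequentially. diff_prob a b n (m1 n) (m2 n) (k n) > 0 \<and>
      V n \<le> ln (diff_prob a b n (m1 n) (m2 n) (k n)) / ln (real n))"
proof -
  have "(\<lambda>n. V1 n + V2 n) \<longlonglongrightarrow> l1 + l2" by (intro tendsto_intros h1 h2)
  moreover have "\<forall>\<^sub>F n in sequentially. diff_prob a b n (m1 n) (m2 n) (k n) > 0 \<and>
      V1 n + V2 n \<le> ln (diff_prob a b n (m1 n) (m2 n) (k n)) / ln (real n)"
    using h1(2) h2(2) hk ev_ln_pos
  proof eventually_elim
    case (elim n)
    define P1 where "P1 = pmf (binomial_pmf (m1 n) (a * ln (real n) / real n)) (x n)"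
    define P2 where "P2 = pmf (binomial_pmf (m2 n) (b * ln (real n) / real n)) (r n)"
    have le: "P1 * P2 \<le> diff_prob a b n (m1 n) (m2 n) (k n)"
      unfolding P1_def P2_def diff_prob_def using elim(3) by (rule prob_ge_point)
    have pos: "P1 > 0" "P2 > 0" using elim(1,2) unfolding P1_def P2_def by auto
    then have "P1 * P2 > 0" by simp
    with le have Ppos: "diff_prob a b n (m1 n) (m2 n) (k n) > 0" by linarith
    have "ln P1 + ln P2 \<le> ln (diff_prob a b n (m1 n) (m2 n) (k n))"
    proof -
      have "ln P1 + ln P2 = ln (P1 * P2)" using pos by (simp add: ln_mult)
      also have "\<dots> \<le> ln (diff_prob a b n (m1 n) (m2 n) (k n))" using le pos Ppos by (subst ln_le_cancel_iff) auto
      finally show ?thesis .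
    qed
    then have "(ln P1 + ln P2) / ln (real n) \<le> ln (diff_prob a b n (m1 n) (m2 n) (k n)) / ln (real n)"
      using elim(4) by (intro divide_right_mono) auto
    moreover have "V1 n + V2 n \<le> (ln P1 + ln P2) / ln (real n)"
      using elim(1,2) unfolding P1_def P2_def by (simp add: add_divide_distrib)
    ultimately show ?case using Ppos by linarith
  qed
  ultimately show ?thesis by blast
qed

lemma lim_floor:
  fixes c :: real assumes c: "c > 0"
  shows "(\<lambda>n. real (nat \<lfloor>c * ln (real n)\<rfloor>) / ln (real n)) \<longlonglongrightarrow> c"
proof (rule tendsto_sandwich[where f = "\<lambda>n. c - 1 / ln (real n)" and h = "\<lambda>n. c"])
  show "(\<lambda>n. c - 1 / ln (real n)) \<longlonglongrightarrow> c" using tendsto_diff[OF tendsto_const lim_inv_ln, of c] by simp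
  show "(\<lambda>n. c) \<longlonglongrightarrow> c" by simp
  have ev: "\<forall>\<^sub>F n in sequentially. ln (real n) > 0 \<and> real (nat \<lfloor>c * ln (real n)\<rfloor>) = of_int \<lfloor>c * ln (real n)\<rfloor>"
    using ev_ln_pos by eventually_elim (use c in auto)
  show "\<forall>\<^sub>F n in sequentially. c - 1 / ln (real n) \<le> real (nat \<lfloor>c * ln (real n)\<rfloor>) / ln (real n)"
    using ev
  proof eventually_elim
    case (elim n)
    have "c * ln (real n) - 1 \<le> of_int \<lfloor>c * ln (real n)\<rfloor>" by linarith
    then have "(c * ln (real n) - 1) / ln (real n) \<le> of_int \<lfloor>c * ln (real n)\<rfloor> / ln (real n)"
      using elim by (intro divide_right_mono) auto
    then show ?case using elim by (simp add: diff_divide_distrib)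
  qed
  show "\<forall>\<^sub>F n in sequentially. real (nat \<lfloor>c * ln (real n)\<rfloor>) / ln (real n) \<le> c"
    using ev
  proof eventually_elim
    case (elim n)
    have "of_int \<lfloor>c * ln (real n)\<rfloor> \<le> c * ln (real n)" by linarith
    then have "of_int \<lfloor>c * ln (real n)\<rfloor> / ln (real n) \<le> c * ln (real n) / ln (real n)"
      using elim by (intro divide_right_mono) auto
    then show ?case using elim by simp
  qed
qed

lemma lim_nat_int:
  fixes z :: "nat \<Rightarrow> int" and c :: real
  assumes c: "c > 0" and hz: "(\<lambda>n. real_of_int (z n) / ln (real n)) \<longlonglongrightarrow> c"
  shows "(\<lambda>n. real (nat (z n)) / ln (real n)) \<longlonglongrightarrow> c" "\<forall>\<^sub>F n in sequentially. z n \<ge> 0"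
proof -
  have ev: "\<forall>\<^sub>F n in sequentially. real_of_int (z n) / ln (real n) > 0" using order_tendstoD(1)[OF hz c] .
  show ev2: "\<forall>\<^sub>F n in sequentially. z n \<ge> 0" using ev ev_ln_pos
    by eventually_elim (auto simp: zero_less_divide_iff)
  have "\<forall>\<^sub>F n in sequentially. real_of_int (z n) / ln (real n) = real (nat (z n)) / ln (real n)"
    using ev2 by eventually_elim simp
  then show "(\<lambda>n. real (nat (z n)) / ln (real n)) \<longlonglongrightarrow> c" using hz by (rule Lim_transform_eventually[rotated])
qed

lemma alg_both:
  fixes a b \<rho>1 \<rho>2 \<alpha> :: real
  assumes ab: "a > 0" "b > 0" and r: "\<rho>1 > 0" "\<rho>2 > 0"
  defines "\<gamma> \<equiv> sqrt (\<alpha>\<^sup>2 + 4 * \<rho>1 * \<rho>2 * a * b)"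
  defines "cx \<equiv> (\<gamma> + \<alpha>) / 2" and "cr \<equiv> (\<gamma> - \<alpha>) / 2"
  defines "\<theta> \<equiv> theta_opt a b \<rho>1 \<rho>2 \<alpha>"
  shows "cx > 0" "cr > 0"
    "cx * ln (\<rho>1 * a / cx) + cx - \<rho>1 * a + (cr * ln (\<rho>2 * b / cr) + cr - \<rho>2 * b)
      = \<theta> * \<alpha> + \<rho>1 * a * (exp (- \<theta>) - 1) + \<rho>2 * b * (exp \<theta> - 1)"
proof -
  have pos: "4 * \<rho>1 * \<rho>2 * a * b > 0" using r ab by simp
  have "0 \<le> \<alpha>\<^sup>2" by simp
  hence nn: "0 \<le> \<alpha>\<^sup>2 + 4 * \<rho>1 * \<rho>2 * a * b" using pos by linarith
  have g2: "\<gamma>\<^sup>2 = \<alpha>\<^sup>2 + 4 * \<rho>1 * \<rho>2 * a * b" unfolding \<gamma>_def using nn by (rule real_sqrt_pow2)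
  have gpos: "\<gamma> \<ge> 0" unfolding \<gamma>_def using nn by simp
  have "\<bar>\<alpha>\<bar> < \<gamma>"
  proof -
    have "\<bar>\<alpha>\<bar>\<^sup>2 < \<gamma>\<^sup>2" using g2 pos by simp
    then show ?thesis using gpos by (rule power2_less_imp_less)
  qed
  hence gm: "\<gamma> - \<alpha> > 0" and gp: "\<gamma> + \<alpha> > 0" by auto
  show "cx > 0" "cr > 0" unfolding cx_def cr_def using gm gp by auto
  have prod: "(\<gamma> - \<alpha>) * (\<gamma> + \<alpha>) = 4 * \<rho>1 * \<rho>2 * a * b" using g2 by (simp add: power2_eq_square algebra_simps)
  define y where "y = (\<gamma> - \<alpha>) / (2 * \<rho>2 * b)"
  have ypos: "y > 0" unfolding y_def using gm r ab by simp
  have th: "\<theta> = ln y" unfolding \<theta>_def theta_opt_def y_def \<gamma>_def using r by simp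
  have ey: "exp \<theta> = y" "exp (- \<theta>) = 1 / y" using th ypos by (simp_all add: exp_minus inverse_eq_divide)
  have e1: "\<rho>1 * a * (1 / y) = cx"
  proof -
    have "\<rho>1 * a * (1 / y) = (4 * \<rho>1 * \<rho>2 * a * b) / (2 * (\<gamma> - \<alpha>))"
      unfolding y_def using gm by (simp add: field_simps)
    also have "\<dots> = ((\<gamma> - \<alpha>) * (\<gamma> + \<alpha>)) / (2 * (\<gamma> - \<alpha>))" by (simp only: prod)
    also have "\<dots> = (\<gamma> + \<alpha>) / 2" using gm by (simp add: divide_simps)
    finally show ?thesis unfolding cx_def .
  qed
  have e2: "\<rho>2 * b * y = cr" unfolding y_def cr_def using r ab by (simp add: field_simps)
  have l1: "ln (\<rho>1 * a / cx) = ln y"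
  proof -
    have "\<rho>1 * a / cx = y" using e1 ypos \<open>cx > 0\<close> by (simp add: field_simps)
    then show ?thesis by simp
  qed
  have l2: "ln (\<rho>2 * b / cr) = - ln y"
  proof -
    have "\<rho>2 * b / cr = 1 / y" using e2 ypos \<open>cr > 0\<close> by (simp add: field_simps)
    then show ?thesis using ypos by (simp add: ln_div)
  qed
  have cxr: "cx - cr = \<alpha>" "cx + cr = \<gamma>" unfolding cx_def cr_def by (simp_all add: field_simps)
  have "\<theta> * \<alpha> + \<rho>1 * a * (exp (- \<theta>) - 1) + \<rho>2 * b * (exp \<theta> - 1)
       = \<alpha> * ln y + \<rho>1 * a * (1 / y) + \<rho>2 * b * y - \<rho>1 * a - \<rho>2 * b"
    unfolding ey by (simp add: th algebra_simps)
  also have "\<dots> = \<alpha> * ln y + cx + cr - \<rho>1 * a - \<rho>2 * b" unfolding e1 e2 by simp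
  also have "\<dots> = cx * ln (\<rho>1 * a / cx) + cx - \<rho>1 * a + (cr * ln (\<rho>2 * b / cr) + cr - \<rho>2 * b)"
    unfolding l1 l2 cxr(1)[symmetric] by (simp add: algebra_simps)
  finally show "cx * ln (\<rho>1 * a / cx) + cx - \<rho>1 * a + (cr * ln (\<rho>2 * b / cr) + cr - \<rho>2 * b)
      = \<theta> * \<alpha> + \<rho>1 * a * (exp (- \<theta>) - 1) + \<rho>2 * b * (exp \<theta> - 1)" by simp
qed

lemma alg_r1zero:
  fixes a b \<rho>2 \<alpha> :: real
  assumes ab: "a > 0" "b > 0" and r: "\<rho>2 > 0" and al: "\<alpha> < 0"
  defines "\<theta> \<equiv> theta_opt a b 0 \<rho>2 \<alpha>"
  shows "- 0 * a + ((- \<alpha>) * ln (\<rho>2 * b / (- \<alpha>)) + (- \<alpha>) - \<rho>2 * b)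
      = \<theta> * \<alpha> + 0 * a * (exp (- \<theta>) - 1) + \<rho>2 * b * (exp \<theta> - 1)"
proof -
  define y where "y = - \<alpha> / (\<rho>2 * b)"
  have ypos: "y > 0" unfolding y_def by (intro divide_pos_pos) (use al r ab in auto)
  have th: "\<theta> = ln y" unfolding \<theta>_def theta_opt_def y_def using r by simp
  have ey: "exp \<theta> = y" using th ypos by simp
  have l: "ln (\<rho>2 * b / (- \<alpha>)) = - ln y"
  proof -
    have "\<rho>2 * b / (- \<alpha>) = 1 / y" unfolding y_def by simp
    then show ?thesis using ypos by (simp add: ln_div)
  qed
  have "\<rho>2 * b * y = - \<alpha>" unfolding y_def using r ab by simp
  then show ?thesis unfolding ey l by (simp add: th algebra_simps)
qed

lemma alg_r2zero:
  fixes a b \<rho>1 \<alpha> :: real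
  assumes ab: "a > 0" "b > 0" and r: "\<rho>1 > 0" and al: "\<alpha> > 0"
  defines "\<theta> \<equiv> theta_opt a b \<rho>1 0 \<alpha>"
  shows "\<alpha> * ln (\<rho>1 * a / \<alpha>) + \<alpha> - \<rho>1 * a + - 0 * b
      = \<theta> * \<alpha> + \<rho>1 * a * (exp (- \<theta>) - 1) + 0 * b * (exp \<theta> - 1)"
proof -
  define y where "y = \<rho>1 * a / \<alpha>"
  have ypos: "y > 0" unfolding y_def using al r ab by simp
  have th: "\<theta> = ln y" unfolding \<theta>_def theta_opt_def y_def using r by simp
  have ey: "exp (- \<theta>) = 1 / y" using th ypos by (simp add: exp_minus inverse_eq_divide)
  have "\<rho>1 * a * (1 / y) = \<alpha>" unfolding y_def using r ab al by simp
  moreover have l: "ln (\<rho>1 * a / \<alpha>) = ln y" by (simp add: y_def)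
  ultimately show ?thesis unfolding ey l by (simp add: th algebra_simps)
qed

lemma lower_exists:
  fixes a b \<rho>1 \<rho>2 \<alpha> :: real and m1 m2 :: "nat \<Rightarrow> nat" and k :: "nat \<Rightarrow> int"
  assumes ab: "a > 0" "b > 0" and r: "\<rho>1 \<ge> 0" "\<rho>2 \<ge> 0" "\<rho>1 > 0 \<or> \<rho>2 > 0"
    and al: "\<alpha> \<le> a * \<rho>1 - b * \<rho>2" "\<rho>2 = 0 \<longrightarrow> \<alpha> > 0"
    and hm1: "(\<lambda>n. real (m1 n) / real n) \<longlonglongrightarrow> \<rho>1"
    and hm2: "(\<lambda>n. real (m2 n) / real n) \<longlonglongrightarrow> \<rho>2"
    and hk: "(\<lambda>n. real_of_int (k n) / ln (real n)) \<longlonglongrightarrow> \<alpha>"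
  shows "\<exists>V. V \<longlonglongrightarrow> - g_rate \<rho>1 \<rho>2 a b \<alpha> \<and> (\<forall>\<^sub>F n in sequentially. diff_prob a b n (m1 n) (m2 n) (k n) > 0 \<and>
      V n \<le> ln (diff_prob a b n (m1 n) (m2 n) (k n)) / ln (real n))"
proof -
  define \<theta> where "\<theta> = theta_opt a b \<rho>1 \<rho>2 \<alpha>"
  note K = key[OF ab r al]
  have goal: "\<exists>V. V \<longlonglongrightarrow> \<theta> * \<alpha> + \<rho>1 * a * (exp (- \<theta>) - 1) + \<rho>2 * b * (exp \<theta> - 1) \<and>
      (\<forall>\<^sub>F n in sequentially. diff_prob a b n (m1 n) (m2 n) (k n) > 0 \<and>
      V n \<le> ln (diff_prob a b n (m1 n) (m2 n) (k n)) / ln (real n))"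
  proof (cases "\<rho>1 > 0 \<and> \<rho>2 > 0")
    case True
    define \<gamma> where "\<gamma> = sqrt (\<alpha>\<^sup>2 + 4 * \<rho>1 * \<rho>2 * a * b)"
    define cx where "cx = (\<gamma> + \<alpha>) / 2"
    define cr where "cr = (\<gamma> - \<alpha>) / 2"
    note A = alg_both[OF ab True[THEN conjunct1] True[THEN conjunct2], of \<alpha>, folded \<gamma>_def, folded cx_def cr_def \<theta>_def]
    define r where "r = (\<lambda>n::nat. nat \<lfloor>cr * ln (real n)\<rfloor>)"
    have hr: "(\<lambda>n. real (r n) / ln (real n)) \<longlonglongrightarrow> cr" unfolding r_def by (rule lim_floor[OF A(2)])
    define z where "z = (\<lambda>n. k n + int (r n))"
    have "(\<lambda>n. real_of_int (k n) / ln (real n) + real (r n) / ln (real n)) \<longlonglongrightarrow> \<alpha> + cr"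
      by (intro tendsto_intros hk hr)
    moreover have "\<alpha> + cr = cx" unfolding cx_def cr_def by (simp add: field_simps)
    ultimately have hz: "(\<lambda>n. real_of_int (z n) / ln (real n)) \<longlonglongrightarrow> cx"
      unfolding z_def by (simp add: add_divide_distrib)
    define x where "x = (\<lambda>n. nat (z n))"
    have Z1: "(\<lambda>n. real (x n) / ln (real n)) \<longlonglongrightarrow> cx" unfolding x_def by (rule lim_nat_int(1)[OF A(1) hz])
    have Z2: "\<forall>\<^sub>F n in sequentially. z n \<ge> 0" by (rule lim_nat_int(2)[OF A(1) hz])
    obtain V1 where V1: "V1 \<longlonglongrightarrow> cx * ln (\<rho>1 * a / cx) + cx - \<rho>1 * a"
      "\<forall>\<^sub>F n in sequentially. pmf (binomial_pmf (m1 n) (a * ln (real n) / real n)) (x n) > 0 \<and>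
        V1 n \<le> ln (pmf (binomial_pmf (m1 n) (a * ln (real n) / real n)) (x n)) / ln (real n)"
      using point_lower[OF ab(1) True[THEN conjunct1] A(1) hm1 Z1] by blast
    obtain V2 where V2: "V2 \<longlonglongrightarrow> cr * ln (\<rho>2 * b / cr) + cr - \<rho>2 * b"
      "\<forall>\<^sub>F n in sequentially. pmf (binomial_pmf (m2 n) (b * ln (real n) / real n)) (r n) > 0 \<and>
        V2 n \<le> ln (pmf (binomial_pmf (m2 n) (b * ln (real n) / real n)) (r n)) / ln (real n)"
      using point_lower[OF ab(2) True[THEN conjunct2] A(2) hm2 hr] by blast
    have hk': "\<forall>\<^sub>F n in sequentially. int (x n) - int (r n) \<le> k n"
      using Z2 by eventually_elim (simp add: x_def z_def)
    show ?thesis using combine_lower[OF V1 V2 hk'] by (simp only: A(3))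
  next
    case False
    show ?thesis
    proof (cases "\<rho>1 = 0")
      case True
      with r have r2: "\<rho>2 > 0" by auto
      have "b * \<rho>2 > 0" using ab r2 by simp
      then have an: "\<alpha> < 0" using al(1) True by simp
      have hm1': "(\<lambda>n. real (m1 n) / real n) \<longlonglongrightarrow> 0" using hm1 True by simp
      obtain V1 where V1: "V1 \<longlonglongrightarrow> - 0 * a"
        "\<forall>\<^sub>F n in sequentially. pmf (binomial_pmf (m1 n) (a * ln (real n) / real n)) 0 > 0 \<and>
          V1 n \<le> ln (pmf (binomial_pmf (m1 n) (a * ln (real n) / real n)) 0) / ln (real n)"
        using point_lower0[OF ab(1) hm1'] by blast
      have hz: "(\<lambda>n. real_of_int (- k n) / ln (real n)) \<longlonglongrightarrow> - \<alpha>"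
        using tendsto_minus[OF hk] by simp
      define r where "r = (\<lambda>n. nat (- k n))"
      have an': "- \<alpha> > 0" using an by simp
      have Z1: "(\<lambda>n. real (r n) / ln (real n)) \<longlonglongrightarrow> - \<alpha>" unfolding r_def by (rule lim_nat_int(1)[OF an' hz])
      have Z2: "\<forall>\<^sub>F n in sequentially. - k n \<ge> 0" by (rule lim_nat_int(2)[OF an' hz])
      obtain V2 where V2: "V2 \<longlonglongrightarrow> (- \<alpha>) * ln (\<rho>2 * b / (- \<alpha>)) + (- \<alpha>) - \<rho>2 * b"
        "\<forall>\<^sub>F n in sequentially. pmf (binomial_pmf (m2 n) (b * ln (real n) / real n)) (r n) > 0 \<and>
          V2 n \<le> ln (pmf (binomial_pmf (m2 n) (b * ln (real n) / real n)) (r n)) / ln (real n)"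
        using point_lower[OF ab(2) r2 an' hm2 Z1] by blast
      have hk': "\<forall>\<^sub>F n in sequentially. int ((\<lambda>n. 0::nat) n) - int (r n) \<le> k n"
        using Z2 by eventually_elim (simp add: r_def)
      have "\<theta> = theta_opt a b 0 \<rho>2 \<alpha>" unfolding \<theta>_def using True by simp
      then have eq: "- 0 * a + ((- \<alpha>) * ln (\<rho>2 * b / (- \<alpha>)) + (- \<alpha>) - \<rho>2 * b)
         = \<theta> * \<alpha> + \<rho>1 * a * (exp (- \<theta>) - 1) + \<rho>2 * b * (exp \<theta> - 1)"
        using alg_r1zero[OF ab r2 an] True by simp
      show ?thesis using combine_lower[OF V1 V2 hk'] by (simp only: eq)
    next
      case False
      with r \<open>\<not> (\<rho>1 > 0 \<and> \<rho>2 > 0)\<close> have r1: "\<rho>1 > 0" and r2: "\<rho>2 = 0" by auto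
      have an: "\<alpha> > 0" using al r2 by simp
      have hm2': "(\<lambda>n. real (m2 n) / real n) \<longlonglongrightarrow> 0" using hm2 r2 by simp
      obtain V2 where V2: "V2 \<longlonglongrightarrow> - 0 * b"
        "\<forall>\<^sub>F n in sequentially. pmf (binomial_pmf (m2 n) (b * ln (real n) / real n)) 0 > 0 \<and>
          V2 n \<le> ln (pmf (binomial_pmf (m2 n) (b * ln (real n) / real n)) 0) / ln (real n)"
        using point_lower0[OF ab(2) hm2'] by blast
      define x where "x = (\<lambda>n. nat (k n))"
      have Z1: "(\<lambda>n. real (x n) / ln (real n)) \<longlonglongrightarrow> \<alpha>" unfolding x_def by (rule lim_nat_int(1)[OF an hk])
      have Z2: "\<forall>\<^sub>F n in sequentially. k n \<ge> 0" by (rule lim_nat_int(2)[OF an hk])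
      obtain V1 where V1: "V1 \<longlonglongrightarrow> \<alpha> * ln (\<rho>1 * a / \<alpha>) + \<alpha> - \<rho>1 * a"
        "\<forall>\<^sub>F n in sequentially. pmf (binomial_pmf (m1 n) (a * ln (real n) / real n)) (x n) > 0 \<and>
          V1 n \<le> ln (pmf (binomial_pmf (m1 n) (a * ln (real n) / real n)) (x n)) / ln (real n)"
        using point_lower[OF ab(1) r1 an hm1 Z1] by blast
      have hk': "\<forall>\<^sub>F n in sequentially. int (x n) - int ((\<lambda>n. 0::nat) n) \<le> k n"
        using Z2 by eventually_elim (simp add: x_def)
      have "\<theta> = theta_opt a b \<rho>1 0 \<alpha>" unfolding \<theta>_def using r2 by simp
      then have eq: "\<alpha> * ln (\<rho>1 * a / \<alpha>) + \<alpha> - \<rho>1 * a + - 0 * b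
         = \<theta> * \<alpha> + \<rho>1 * a * (exp (- \<theta>) - 1) + \<rho>2 * b * (exp \<theta> - 1)"
        using alg_r2zero[OF ab r1 an] r2 by simp
      show ?thesis using combine_lower[OF V1 V2 hk'] by (simp only: eq)
    qed
  qed
  then show ?thesis using K(2) unfolding \<theta>_def by simp
qed

lemma part1:
  fixes a b \<alpha> \<rho>1 \<rho>2 :: real
  assumes ab: "a > 0" "b > 0"
  shows
    "(\<forall>(m1 :: nat \<Rightarrow> nat) (m2 :: nat \<Rightarrow> nat) (k :: nat \<Rightarrow> int).
        \<rho>1 \<ge> 0 \<longrightarrow> \<rho>2 \<ge> 0 \<longrightarrow> (\<rho>1 > 0 \<or> \<rho>2 > 0) \<longrightarrow>
        (\<lambda>n. real (m1 n) - \<rho>1 * real n) \<in> o(\<lambda>n. real n) \<longrightarrow>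
        (\<lambda>n. real (m2 n) - \<rho>2 * real n) \<in> o(\<lambda>n. real n) \<longrightarrow>
        (\<lambda>n. real_of_int (k n) - \<alpha> * ln (real n)) \<in> o(\<lambda>n. ln (real n)) \<longrightarrow>
        \<alpha> \<le> a * \<rho>1 - b * \<rho>2 \<longrightarrow>
        (\<rho>2 = 0 \<longrightarrow> \<alpha> > 0) \<longrightarrow>
        (\<exists>\<epsilon> :: nat \<Rightarrow> real. \<epsilon> \<longlonglongrightarrow> 0 \<and>
           (\<forall>\<^sub>F n in sequentially.
              diff_prob a b n (m1 n) (m2 n) (k n) = real n powr (- g_rate \<rho>1 \<rho>2 a b \<alpha> + \<epsilon> n))))"
proof (intro allI impI)
  fix m1 m2 :: "nat \<Rightarrow> nat" and k :: "nat \<Rightarrow> int"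
  assume r1: "\<rho>1 \<ge> 0" and r2: "\<rho>2 \<ge> 0" and r12: "\<rho>1 > 0 \<or> \<rho>2 > 0"
    and om1: "(\<lambda>n. real (m1 n) - \<rho>1 * real n) \<in> o(\<lambda>n. real n)"
    and om2: "(\<lambda>n. real (m2 n) - \<rho>2 * real n) \<in> o(\<lambda>n. real n)"
    and ok: "(\<lambda>n. real_of_int (k n) - \<alpha> * ln (real n)) \<in> o(\<lambda>n. ln (real n))"
    and al: "\<alpha> \<le> a * \<rho>1 - b * \<rho>2" and al2: "\<rho>2 = 0 \<longrightarrow> \<alpha> > 0"
  define P where "P = (\<lambda>n. diff_prob a b n (m1 n) (m2 n) (k n))"
  define g where "g = g_rate \<rho>1 \<rho>2 a b \<alpha>"
  have ev1: "\<forall>\<^sub>F n in sequentially. real n > 0" using eventually_ge_at_top[of "1::nat"]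
    by eventually_elim simp
  have hm: "(\<lambda>n. real (m n) / real n) \<longlonglongrightarrow> \<rho>"
    if om: "(\<lambda>n. real (m n) - \<rho> * real n) \<in> o(\<lambda>n. real n)" for m :: "nat \<Rightarrow> nat" and \<rho>
  proof -
    have "(\<lambda>n. (real (m n) - \<rho> * real n) / real n + \<rho>) \<longlonglongrightarrow> 0 + \<rho>"
      by (intro tendsto_intros smalloD_tendsto[OF om])
    moreover have "\<forall>\<^sub>F n in sequentially. (real (m n) - \<rho> * real n) / real n + \<rho> = real (m n) / real n"
      using ev1 by eventually_elim (simp add: field_simps)
    ultimately show ?thesis by (simp add: Lim_transform_eventually)
  qed
  have hm1: "(\<lambda>n. real (m1 n) / real n) \<longlonglongrightarrow> \<rho>1" by (rule hm[OF om1])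
  have hm2: "(\<lambda>n. real (m2 n) / real n) \<longlonglongrightarrow> \<rho>2" by (rule hm[OF om2])
  have hk: "(\<lambda>n. real_of_int (k n) / ln (real n)) \<longlonglongrightarrow> \<alpha>"
  proof -
    have "(\<lambda>n. (real_of_int (k n) - \<alpha> * ln (real n)) / ln (real n) + \<alpha>) \<longlonglongrightarrow> 0 + \<alpha>"
      by (intro tendsto_intros smalloD_tendsto[OF ok])
    moreover have "\<forall>\<^sub>F n in sequentially. (real_of_int (k n) - \<alpha> * ln (real n)) / ln (real n) + \<alpha> = real_of_int (k n) / ln (real n)"
      using ev_ln_pos by eventually_elim (simp add: field_simps)
    ultimately show ?thesis by (simp add: Lim_transform_eventually)
  qed
  define \<theta> where "\<theta> = theta_opt a b \<rho>1 \<rho>2 \<alpha>"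
  note K = key[OF ab r1 r2 r12 al al2, folded \<theta>_def]
  define U where "U = (\<lambda>n. \<theta> * (real_of_int (k n) / ln (real n)) + real (m1 n) / real n * a * (exp (- \<theta>) - 1)
      + real (m2 n) / real n * b * (exp \<theta> - 1))"
  have "U \<longlonglongrightarrow> \<theta> * \<alpha> + \<rho>1 * a * (exp (- \<theta>) - 1) + \<rho>2 * b * (exp \<theta> - 1)"
    unfolding U_def by (intro tendsto_intros hk hm1 hm2)
  then have limU: "U \<longlonglongrightarrow> - g" using K(2) unfolding g_def by simp
  have evp1: "\<forall>\<^sub>F n in sequentially. a * ln (real n) / real n < 1" using order_tendstoD(2)[OF lim_p, of 1] by simp
  have evp2: "\<forall>\<^sub>F n in sequentially. b * ln (real n) / real n < 1" using order_tendstoD(2)[OF lim_p, of 1] by simp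
  have evU: "\<forall>\<^sub>F n in sequentially. P n > 0 \<longrightarrow> ln (P n) / ln (real n) \<le> U n"
    using ev_ln_pos ev1 evp1 evp2
  proof eventually_elim
    case (elim n)
    define L where "L = ln (real n)"
    have L: "L > 0" using elim(1) unfolding L_def .
    have "P n \<le> exp (\<theta> * k n + real (m1 n) * (a * L / real n) * (exp (-\<theta>) - 1) + real (m2 n) * (b * L / real n) * (exp \<theta> - 1))"
      unfolding P_def diff_prob_def L_def
      by (rule chernoff) (use elim ab K(1) in \<open>auto simp: L_def\<close>)
    also have "\<theta> * k n + real (m1 n) * (a * L / real n) * (exp (-\<theta>) - 1) + real (m2 n) * (b * L / real n) * (exp \<theta> - 1)
        = L * U n"
      unfolding U_def L_def[symmetric] using L elim(2) by (simp add: field_simps)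
    finally have Pl: "P n \<le> exp (L * U n)" .
    show ?case
    proof
      assume "P n > 0"
      then have "ln (P n) \<le> ln (exp (L * U n))" using Pl by (subst ln_le_cancel_iff) auto
      then have "ln (P n) \<le> L * U n" by simp
      then have "ln (P n) / L \<le> U n" using L by (simp add: divide_simps mult.commute)
      then show "ln (P n) / ln (real n) \<le> U n" unfolding L_def .
    qed
  qed
  obtain V where V: "V \<longlonglongrightarrow> - g" "\<forall>\<^sub>F n in sequentially. P n > 0 \<and> V n \<le> ln (P n) / ln (real n)"
    using lower_exists[OF ab r1 r2 r12 al al2 hm1 hm2 hk] unfolding P_def g_def by blast
  define \<epsilon> where "\<epsilon> = (\<lambda>n. ln (P n) / ln (real n) + g)"
  have "\<epsilon> \<longlonglongrightarrow> 0"
  proof (rule tendsto_sandwich[where f = "\<lambda>n. V n + g" and h = "\<lambda>n. U n + g"])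
    show "\<forall>\<^sub>F n in sequentially. V n + g \<le> \<epsilon> n" using V(2) unfolding \<epsilon>_def by eventually_elim simp
    show "\<forall>\<^sub>F n in sequentially. \<epsilon> n \<le> U n + g" using V(2) evU unfolding \<epsilon>_def by eventually_elim simp
    show "(\<lambda>n. V n + g) \<longlonglongrightarrow> 0" using tendsto_add[OF V(1) tendsto_const[of g]] by simp
    show "(\<lambda>n. U n + g) \<longlonglongrightarrow> 0" using tendsto_add[OF limU tendsto_const[of g]] by simp
  qed
  moreover have "\<forall>\<^sub>F n in sequentially. diff_prob a b n (m1 n) (m2 n) (k n) = real n powr (- g_rate \<rho>1 \<rho>2 a b \<alpha> + \<epsilon> n)"
    using V(2) ev_ln_pos ev1
  proof eventually_elim
    case (elim n)
    have "real n powr (- g_rate \<rho>1 \<rho>2 a b \<alpha> + \<epsilon> n) = real n powr (ln (P n) / ln (real n))"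
      unfolding \<epsilon>_def g_def by simp
    also have "\<dots> = exp (ln (P n) / ln (real n) * ln (real n))" using elim(3) by (simp add: powr_def)
    also have "\<dots> = P n" using elim by simp
    finally show ?case unfolding P_def by simp
  qed
  ultimately show "\<exists>\<epsilon> :: nat \<Rightarrow> real. \<epsilon> \<longlonglongrightarrow> 0 \<and>
           (\<forall>\<^sub>F n in sequentially.
              diff_prob a b n (m1 n) (m2 n) (k n) = real n powr (- g_rate \<rho>1 \<rho>2 a b \<alpha> + \<epsilon> n))" by blast
qed

lemma part2:
  fixes a b :: real
  assumes ab: "a > 0" "b > 0"
  shows "\<forall>(n :: nat) (m1 :: nat) (m2 :: nat) (k :: int).
        n \<ge> 1 \<longrightarrow> a * ln (real n) / real n \<le> 1 \<longrightarrow> b * ln (real n) / real n \<le> 1 \<longrightarrow>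
        (m1 > 0 \<or> m2 > 0) \<longrightarrow>
        real_of_int k \<le> (real m1 * a - real m2 * b) * ln (real n) / real n \<longrightarrow>
        (m2 = 0 \<longrightarrow> k > 0) \<longrightarrow>
        diff_prob a b n m1 m2 k
          \<le> real n powr (- g_rate (real m1 / real n) (real m2 / real n) a b (real_of_int k / ln (real n)))"
proof (intro allI impI)
  fix n m1 m2 :: nat and k :: int
  assume n: "n \<ge> 1" and p1: "a * ln (real n) / real n \<le> 1" and p2: "b * ln (real n) / real n \<le> 1"
    and m: "m1 > 0 \<or> m2 > 0" and kle: "real_of_int k \<le> (real m1 * a - real m2 * b) * ln (real n) / real n"
    and k0: "m2 = 0 \<longrightarrow> k > 0"
  show "diff_prob a b n m1 m2 k
          \<le> real n powr (- g_rate (real m1 / real n) (real m2 / real n) a b (real_of_int k / ln (real n)))"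
  proof (cases "n = 1")
    case True
    then show ?thesis unfolding diff_prob_def by (simp add: measure_pmf.prob_le_1)
  next
    case False
    with n have n2: "n \<ge> 2" by simp
    define L where "L = ln (real n)"
    have L: "L > 0" unfolding L_def using n2 by simp
    have npos: "real n > 0" using n2 by simp
    define \<rho>1 where "\<rho>1 = real m1 / real n"
    define \<rho>2 where "\<rho>2 = real m2 / real n"
    define \<alpha> where "\<alpha> = real_of_int k / L"
    define \<theta> where "\<theta> = theta_opt a b \<rho>1 \<rho>2 \<alpha>"
    have r: "\<rho>1 \<ge> 0" "\<rho>2 \<ge> 0" "\<rho>1 > 0 \<or> \<rho>2 > 0" unfolding \<rho>1_def \<rho>2_def using m npos by auto
    have al1: "\<alpha> \<le> a * \<rho>1 - b * \<rho>2"
    proof -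
      have "real_of_int k / L \<le> (real m1 * a - real m2 * b) / real n"
        using kle L npos unfolding L_def by (simp add: field_simps)
      then show ?thesis unfolding \<alpha>_def \<rho>1_def \<rho>2_def by (simp add: diff_divide_distrib algebra_simps)
    qed
    have al2: "\<rho>2 = 0 \<longrightarrow> \<alpha> > 0" unfolding \<rho>2_def \<alpha>_def using k0 L npos by auto
    note K = key[OF ab r al1 al2]
    have "diff_prob a b n m1 m2 k \<le> exp (\<theta> * k + real m1 * (a * L / real n) * (exp (-\<theta>) - 1) + real m2 * (b * L / real n) * (exp \<theta> - 1))"
      unfolding diff_prob_def L_def
      by (rule chernoff) (use p1 p2 ab L K(1) npos in \<open>auto simp: \<theta>_def L_def\<close>)
    also have "\<theta> * k + real m1 * (a * L / real n) * (exp (-\<theta>) - 1) + real m2 * (b * L / real n) * (exp \<theta> - 1)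
        = L * (\<theta> * \<alpha> + \<rho>1 * a * (exp (- \<theta>) - 1) + \<rho>2 * b * (exp \<theta> - 1))"
      unfolding \<alpha>_def \<rho>1_def \<rho>2_def using L npos by (simp add: field_simps)
    also have "\<dots> = - g_rate \<rho>1 \<rho>2 a b \<alpha> * L" using K(2) unfolding \<theta>_def by simp
    also have "exp \<dots> = real n powr (- g_rate \<rho>1 \<rho>2 a b \<alpha>)" unfolding L_def powr_def using npos by simp
    finally show ?thesis unfolding \<rho>1_def \<rho>2_def \<alpha>_def L_def .
  qed
qed

theorem lemma2:
  fixes a b \<alpha> \<rho>1 \<rho>2 :: real
  assumes "a > 0" and "b > 0"
  shows
    "(\<forall>(m1 :: nat \<Rightarrow> nat) (m2 :: nat \<Rightarrow> nat) (k :: nat \<Rightarrow> int).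
        \<rho>1 \<ge> 0 \<longrightarrow> \<rho>2 \<ge> 0 \<longrightarrow> (\<rho>1 > 0 \<or> \<rho>2 > 0) \<longrightarrow>
        (\<lambda>n. real (m1 n) - \<rho>1 * real n) \<in> o(\<lambda>n. real n) \<longrightarrow>
        (\<lambda>n. real (m2 n) - \<rho>2 * real n) \<in> o(\<lambda>n. real n) \<longrightarrow>
        (\<lambda>n. real_of_int (k n) - \<alpha> * ln (real n)) \<in> o(\<lambda>n. ln (real n)) \<longrightarrow>
        \<alpha> \<le> a * \<rho>1 - b * \<rho>2 \<longrightarrow>
        (\<rho>2 = 0 \<longrightarrow> \<alpha> > 0) \<longrightarrow>
        (\<exists>\<epsilon> :: nat \<Rightarrow> real. \<epsilon> \<longlonglongrightarrow> 0 \<and>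
           (\<forall>\<^sub>F n in sequentially.
              diff_prob a b n (m1 n) (m2 n) (k n) = real n powr (- g_rate \<rho>1 \<rho>2 a b \<alpha> + \<epsilon> n))))
     \<and>
     (\<forall>(n :: nat) (m1 :: nat) (m2 :: nat) (k :: int).
        n \<ge> 1 \<longrightarrow> a * ln (real n) / real n \<le> 1 \<longrightarrow> b * ln (real n) / real n \<le> 1 \<longrightarrow>
        (m1 > 0 \<or> m2 > 0) \<longrightarrow>
        real_of_int k \<le> (real m1 * a - real m2 * b) * ln (real n) / real n \<longrightarrow>
        (m2 = 0 \<longrightarrow> k > 0) \<longrightarrow>
        diff_prob a b n m1 m2 k
          \<le> real n powr (- g_rate (real m1 / real n) (real m2 / real n) a b (real_of_int k / ln (real n))))"
  using part1[OF assms] part2[OF assms] by blast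

end
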